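(* Let $t\geq 1$ be an integer. Let $(V,P)$ be an irreducible, reversible Markov process on a finite set $V$ with stationary distribution $\pi$, and let $\sigma,\nu$ be probability distributions on $V$ with disjoint supports. Then \[\sum_{v\in V}\frac{\nu_v^2}{\pi_v}\leq 2R_{\mathrm{eff}}(P^t;\sigma-\nu).\]
   Context: A Markov process $(V,P)$ has a row-stochastic transition matrix $P$; irreducible means every state can reach every other with positive probability in some number of steps (then the stationary distribution $\pi=\pi P$ is unique with $\pi_v>0$); reversible means $\pi_vP_{vw}=\pi_wP_{wv}$ for all $v,w$ (so $P^t$ is also reversible with respect to $\pi$). For a process $Q$ reversible with respect to $\pi$, associate the undirected graph on $V$ with an edge $\{v,w\}$ whenever $Q_{vw}>0$ and resistance $r_{\{v,w\}}=1/(\pi_vQ_{vw})$, each edge arbitrarily oriented. For $\xi\in\mathbb{R}^V$, $R_{\mathrm{eff}}(Q;\xi)$ is the minimum of the energy $\sum_e r_ef_e^2$ over flows $f:E\to\mathbb{R}$ whose net-flow $\delta_f(v)=\sum_{e\text{ out of }v}f_e-\sum_{e\text{ into }v}f_e$ equals $\xi$ (taken to be $+\infty$ if no such flow exists). *)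

theory Defs
  imports "HOL-Analysis.Analysis" "HOL-Library.Extended_Real"
begin

(* Markov kernels on a finite state set V, represented as functions 'v => 'v => real;
   only the values on V x V matter. *)

definition stochastic :: "'v set \<Rightarrow> ('v \<Rightarrow> 'v \<Rightarrow> real) \<Rightarrow> bool" where
  "stochastic V P \<longleftrightarrow> (\<forall>v\<in>V. \<forall>w\<in>V. P v w \<ge> 0) \<and> (\<forall>v\<in>V. (\<Sum>w\<in>V. P v w) = 1)"

fun mpow :: "'v set \<Rightarrow> ('v \<Rightarrow> 'v \<Rightarrow> real) \<Rightarrow> nat \<Rightarrow> 'v \<Rightarrow> 'v \<Rightarrow> real" where
  "mpow V P 0 = (\<lambda>v w. if v = w then 1 else 0)"
| "mpow V P (Suc n) = (\<lambda>v w. \<Sum>u\<in>V. mpow V P n v u * P u w)"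

definition irreducible_chain :: "'v set \<Rightarrow> ('v \<Rightarrow> 'v \<Rightarrow> real) \<Rightarrow> bool" where
  "irreducible_chain V P \<longleftrightarrow> (\<forall>v\<in>V. \<forall>w\<in>V. \<exists>n. mpow V P n v w > 0)"

definition stationary :: "'v set \<Rightarrow> ('v \<Rightarrow> 'v \<Rightarrow> real) \<Rightarrow> ('v \<Rightarrow> real) \<Rightarrow> bool" where
  "stationary V P \<pi> \<longleftrightarrow> (\<forall>v\<in>V. \<pi> v \<ge> 0) \<and> (\<Sum>v\<in>V. \<pi> v) = 1 \<and>
     (\<forall>w\<in>V. (\<Sum>v\<in>V. \<pi> v * P v w) = \<pi> w)"

definition reversible :: "'v set \<Rightarrow> ('v \<Rightarrow> 'v \<Rightarrow> real) \<Rightarrow> ('v \<Rightarrow> real) \<Rightarrow> bool" where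
  "reversible V P \<pi> \<longleftrightarrow> (\<forall>v\<in>V. \<forall>w\<in>V. \<pi> v * P v w = \<pi> w * P w v)"

definition prob_dist :: "'v set \<Rightarrow> ('v \<Rightarrow> real) \<Rightarrow> bool" where
  "prob_dist V \<mu> \<longleftrightarrow> (\<forall>v\<in>V. \<mu> v \<ge> 0) \<and> (\<Sum>v\<in>V. \<mu> v) = 1"

definition supp :: "'v set \<Rightarrow> ('v \<Rightarrow> real) \<Rightarrow> 'v set" where
  "supp V \<mu> = {v\<in>V. \<mu> v \<noteq> 0}"

(* Electrical network of a process Q reversible w.r.t. pi: edge {v,w} (v \<noteq> w) iff Q v w > 0,
   resistance 1/(pi v * Q v w).  A flow with an arbitrary orientation of each edge is
   encoded equivalently as an antisymmetric function on ordered pairs supported on edges;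
   each undirected edge then contributes r_e f_e^2 = (1/2)(r f(v,w)^2 + r f(w,v)^2). *)

definition is_flow :: "'v set \<Rightarrow> ('v \<Rightarrow> 'v \<Rightarrow> real) \<Rightarrow> ('v \<Rightarrow> 'v \<Rightarrow> real) \<Rightarrow> bool" where
  "is_flow V Q f \<longleftrightarrow>
     (\<forall>v w. f v w = - f w v) \<and>
     (\<forall>v w. f v w \<noteq> 0 \<longrightarrow> v \<in> V \<and> w \<in> V \<and> v \<noteq> w \<and> Q v w > 0)"

definition net_flow :: "'v set \<Rightarrow> ('v \<Rightarrow> 'v \<Rightarrow> real) \<Rightarrow> 'v \<Rightarrow> real" where
  "net_flow V f v = (\<Sum>w\<in>V. f v w)"

definition energy :: "'v set \<Rightarrow> ('v \<Rightarrow> 'v \<Rightarrow> real) \<Rightarrow> ('v \<Rightarrow> real) \<Rightarrow> ('v \<Rightarrow> 'v \<Rightarrow> real) \<Rightarrow> real" where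
  "energy V Q \<pi> f = (1/2) * (\<Sum>v\<in>V. \<Sum>w\<in>V. if v \<noteq> w \<and> Q v w > 0
        then (1 / (\<pi> v * Q v w)) * (f v w)\<^sup>2 else 0)"

(* effective resistance: infimum (it is attained) of energies of flows with net flow xi;
   +infinity if no such flow exists (Inf of the empty set of ereals). *)
definition R_eff :: "'v set \<Rightarrow> ('v \<Rightarrow> 'v \<Rightarrow> real) \<Rightarrow> ('v \<Rightarrow> real) \<Rightarrow> ('v \<Rightarrow> real) \<Rightarrow> ereal" where
  "R_eff V Q \<pi> \<xi> = Inf {ereal (energy V Q \<pi> f) | f.
       is_flow V Q f \<and> (\<forall>v\<in>V. net_flow V f v = \<xi> v)}"

end

theory Submission
  imports Defs
begin

lemma mpow_nonneg:
  assumes "stochastic V P" "v \<in> V" "w \<in> V"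
  shows "mpow V P n v w \<ge> 0"
  using assms(3)
proof (induction n arbitrary: w)
  case 0 then show ?case by simp
next
  case (Suc n)
  have "\<And>u. u \<in> V \<Longrightarrow> 0 \<le> mpow V P n v u * P u w"
    using Suc assms(1) unfolding stochastic_def by (simp add: mult_nonneg_nonneg)
  then show ?case by (simp add: sum_nonneg)
qed

lemma mpow_rowsum:
  assumes "finite V" "stochastic V P" "v \<in> V"
  shows "(\<Sum>w\<in>V. mpow V P n v w) = 1"
proof (induction n)
  case 0 then show ?case using assms by simp
next
  case (Suc n)
  have "(\<Sum>w\<in>V. mpow V P (Suc n) v w) = (\<Sum>w\<in>V. \<Sum>u\<in>V. mpow V P n v u * P u w)" by simp
  also have "\<dots> = (\<Sum>u\<in>V. \<Sum>w\<in>V. mpow V P n v u * P u w)" by (rule sum.swap)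
  also have "\<dots> = (\<Sum>u\<in>V. mpow V P n v u * (\<Sum>w\<in>V. P u w))" by (simp add: sum_distrib_left)
  also have "\<dots> = (\<Sum>u\<in>V. mpow V P n v u)"
    using assms(2) unfolding stochastic_def by simp
  finally show ?case using Suc by simp
qed

lemma mpow_stat:
  assumes "finite V" "stationary V P \<pi>" "w \<in> V"
  shows "(\<Sum>v\<in>V. \<pi> v * mpow V P n v w) = \<pi> w"
  using assms(3)
proof (induction n arbitrary: w)
  case 0
  have "(\<Sum>v\<in>V. \<pi> v * mpow V P 0 v w) = (\<Sum>v\<in>V. if v = w then \<pi> v else 0)"
    by (intro sum.cong) auto
  also have "\<dots> = \<pi> w" using 0 assms(1) by simp
  finally show ?case .
next
  case (Suc n)
  have "(\<Sum>v\<in>V. \<pi> v * mpow V P (Suc n) v w) = (\<Sum>v\<in>V. \<Sum>u\<in>V. \<pi> v * mpow V P n v u * P u w)"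
    by (simp add: sum_distrib_left mult.assoc)
  also have "\<dots> = (\<Sum>u\<in>V. \<Sum>v\<in>V. \<pi> v * mpow V P n v u * P u w)" by (rule sum.swap)
  also have "\<dots> = (\<Sum>u\<in>V. (\<Sum>v\<in>V. \<pi> v * mpow V P n v u) * P u w)" by (simp add: sum_distrib_right)
  also have "\<dots> = (\<Sum>u\<in>V. \<pi> u * P u w)" using Suc.IH by simp
  also have "\<dots> = \<pi> w" using assms(2) Suc.prems unfolding stationary_def by simp
  finally show ?case .
qed

lemma pi_pos:
  assumes "finite V" "stochastic V P" "irreducible_chain V P" "stationary V P \<pi>" "w \<in> V"
  shows "\<pi> w > 0"
proof -
  have nn: "\<forall>v\<in>V. \<pi> v \<ge> 0" and s1: "(\<Sum>v\<in>V. \<pi> v) = 1" using assms(4) unfolding stationary_def by auto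
  obtain v where v: "v \<in> V" "\<pi> v > 0"
  proof (rule ccontr)
    assume "\<not> thesis"
    then have "\<forall>v\<in>V. \<pi> v \<le> 0" using that by force
    then have "(\<Sum>v\<in>V. \<pi> v) \<le> 0" by (simp add: sum_nonpos)
    with s1 show False by simp
  qed
  obtain n where n: "mpow V P n v w > 0" using assms(3) v(1) assms(5) unfolding irreducible_chain_def by blast
  have "\<pi> v * mpow V P n v w \<le> (\<Sum>u\<in>V. \<pi> u * mpow V P n u w)"
    using v(1) assms(1) nn mpow_nonneg[OF assms(2) _ assms(5)]
    by (intro member_le_sum) (auto intro: mult_nonneg_nonneg)
  also have "\<dots> = \<pi> w" using mpow_stat[OF assms(1) assms(4) assms(5)] .
  finally show ?thesis using v(2) n by (smt (verit) mult_pos_pos)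
qed

lemma amgm: "(c::real) > 0 \<Longrightarrow> f * d \<le> f\<^sup>2 / c + c * d\<^sup>2 / 4"
proof -
  assume c: "c > 0"
  have "0 \<le> (f - c * d / 2)\<^sup>2 / c" using c by simp
  also have "\<dots> = f\<^sup>2 / c - f * d + c * d\<^sup>2 / 4" using c
    by (simp add: power2_eq_square field_simps)
  finally show ?thesis by simp
qed

theorem lemma3p3:
  fixes V :: "'v set" and P :: "'v \<Rightarrow> 'v \<Rightarrow> real" and \<pi> \<sigma> \<nu> :: "'v \<Rightarrow> real" and t :: nat
  assumes "finite V" and "V \<noteq> {}"
    and "t \<ge> 1"
    and "stochastic V P"
    and "irreducible_chain V P"
    and "stationary V P \<pi>"
    and "reversible V P \<pi>"
    and "prob_dist V \<sigma>" and "prob_dist V \<nu>"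
    and "supp V \<sigma> \<inter> supp V \<nu> = {}"
  shows "ereal (\<Sum>v\<in>V. (\<nu> v)\<^sup>2 / \<pi> v) \<le> 2 * R_eff V (mpow V P t) \<pi> (\<lambda>v. \<sigma> v - \<nu> v)"
proof -
  define Q where "Q = mpow V P t"
  define S where "S = (\<Sum>v\<in>V. (\<nu> v)\<^sup>2 / \<pi> v)"
  define \<phi> where "\<phi> v = \<nu> v / \<pi> v" for v
  have fin: "finite V" by fact
  have pp: "\<And>v. v \<in> V \<Longrightarrow> \<pi> v > 0" using pi_pos[OF assms(1,4,5,6)] by blast
  have Qnn: "\<And>v w. v \<in> V \<Longrightarrow> w \<in> V \<Longrightarrow> Q v w \<ge> 0" unfolding Q_def using mpow_nonneg[OF assms(4)] by blast
  have Qrow: "\<And>v. v \<in> V \<Longrightarrow> (\<Sum>w\<in>V. Q v w) = 1" unfolding Q_def using mpow_rowsum[OF assms(1,4)] by blast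
  have Qst: "\<And>w. w \<in> V \<Longrightarrow> (\<Sum>v\<in>V. \<pi> v * Q v w) = \<pi> w" unfolding Q_def using mpow_stat[OF assms(1,6)] by blast
  have sn: "\<And>v. v \<in> V \<Longrightarrow> \<sigma> v * \<nu> v = 0" using assms(10) unfolding supp_def by auto
  have Sphi: "S = (\<Sum>v\<in>V. \<pi> v * (\<phi> v)\<^sup>2)"
    unfolding S_def \<phi>_def using pp by (intro sum.cong) (auto simp: power2_eq_square)
  have D: "(\<Sum>v\<in>V. \<Sum>w\<in>V. \<pi> v * Q v w * (\<phi> w - \<phi> v)\<^sup>2) \<le> 4 * S"
  proof -
    have "(\<Sum>v\<in>V. \<Sum>w\<in>V. \<pi> v * Q v w * (\<phi> w - \<phi> v)\<^sup>2)
        \<le> (\<Sum>v\<in>V. \<Sum>w\<in>V. 2 * (\<pi> v * Q v w * (\<phi> w)\<^sup>2) + 2 * (\<pi> v * Q v w * (\<phi> v)\<^sup>2))"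
    proof (intro sum_mono)
      fix v w assume "v \<in> V" "w \<in> V"
      then have c: "\<pi> v * Q v w \<ge> 0" using pp Qnn by (simp add: less_imp_le)
      have "(\<phi> w - \<phi> v)\<^sup>2 \<le> 2 * (\<phi> w)\<^sup>2 + 2 * (\<phi> v)\<^sup>2"
        by (smt (verit) power2_diff sum_squares_ge_zero zero_le_power2 power2_sum)
      from mult_left_mono[OF this c] show "\<pi> v * Q v w * (\<phi> w - \<phi> v)\<^sup>2
         \<le> 2 * (\<pi> v * Q v w * (\<phi> w)\<^sup>2) + 2 * (\<pi> v * Q v w * (\<phi> v)\<^sup>2)"
        by (simp add: algebra_simps)
    qed
    also have "\<dots> = 2 * (\<Sum>v\<in>V. \<Sum>w\<in>V. \<pi> v * Q v w * (\<phi> w)\<^sup>2) + 2 * (\<Sum>v\<in>V. \<Sum>w\<in>V. \<pi> v * Q v w * (\<phi> v)\<^sup>2)"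
      by (simp add: sum.distrib sum_distrib_left)
    also have "(\<Sum>v\<in>V. \<Sum>w\<in>V. \<pi> v * Q v w * (\<phi> w)\<^sup>2) = (\<Sum>w\<in>V. \<Sum>v\<in>V. \<pi> v * Q v w * (\<phi> w)\<^sup>2)"
      by (rule sum.swap)
    also have "\<dots> = (\<Sum>w\<in>V. (\<Sum>v\<in>V. \<pi> v * Q v w) * (\<phi> w)\<^sup>2)" by (simp add: sum_distrib_right)
    also have "\<dots> = S" unfolding Sphi using Qst by simp
    also have "(\<Sum>v\<in>V. \<Sum>w\<in>V. \<pi> v * Q v w * (\<phi> v)\<^sup>2) = (\<Sum>v\<in>V. \<pi> v * (\<phi> v)\<^sup>2 * (\<Sum>w\<in>V. Q v w))"
      by (intro sum.cong refl, subst sum_distrib_left) (simp add: mult_ac)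
    also have "\<dots> = S" unfolding Sphi using Qrow by simp
    finally show ?thesis by simp
  qed
  have key: "S \<le> 2 * energy V Q \<pi> f" if fl: "is_flow V Q f" and nf: "\<forall>v\<in>V. net_flow V f v = \<sigma> v - \<nu> v" for f
  proof -
    have anti: "\<And>v w. f v w = - f w v" using fl unfolding is_flow_def by blast
    have supp_f: "\<And>v w. f v w \<noteq> 0 \<Longrightarrow> v \<noteq> w \<and> Q v w > 0" using fl unfolding is_flow_def by blast
    have "(\<Sum>v\<in>V. (\<sigma> v - \<nu> v) * \<phi> v) = - S"
    proof -
      have "(\<Sum>v\<in>V. (\<sigma> v - \<nu> v) * \<phi> v) = (\<Sum>v\<in>V. - ((\<nu> v)\<^sup>2 / \<pi> v))"
      proof (intro sum.cong refl)
        fix v assume v: "v \<in> V"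
        have "\<sigma> v * \<phi> v = 0" using sn[OF v] unfolding \<phi>_def by simp
        then show "(\<sigma> v - \<nu> v) * \<phi> v = - ((\<nu> v)\<^sup>2 / \<pi> v)"
          using sn[OF v] pp[OF v] unfolding \<phi>_def by (simp add: power2_eq_square field_simps)
      qed
      then show ?thesis unfolding S_def by (simp add: sum_negf)
    qed
    moreover have "(\<Sum>v\<in>V. (\<sigma> v - \<nu> v) * \<phi> v) = (\<Sum>v\<in>V. \<Sum>w\<in>V. f v w * \<phi> v)"
      using nf unfolding net_flow_def by (intro sum.cong refl) (simp add: sum_distrib_right[symmetric])
    moreover have "(\<Sum>v\<in>V. \<Sum>w\<in>V. f v w * \<phi> v) = - (\<Sum>v\<in>V. \<Sum>w\<in>V. f v w * \<phi> w)"
    proof -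
      have "(\<Sum>v\<in>V. \<Sum>w\<in>V. f v w * \<phi> v) = (\<Sum>v\<in>V. \<Sum>w\<in>V. - (f w v * \<phi> v))"
        by (intro sum.cong refl) (metis anti mult_minus_left)
      also have "\<dots> = - (\<Sum>v\<in>V. \<Sum>w\<in>V. f w v * \<phi> v)" by (simp add: sum_negf)
      also have "(\<Sum>v\<in>V. \<Sum>w\<in>V. f w v * \<phi> v) = (\<Sum>w\<in>V. \<Sum>v\<in>V. f w v * \<phi> v)" by (rule sum.swap)
      finally show ?thesis .
    qed
    ultimately have S2: "S = (1/2) * (\<Sum>v\<in>V. \<Sum>w\<in>V. f v w * (\<phi> w - \<phi> v))"
      by (simp add: algebra_simps sum_subtractf)
    define g where "g v w = (if v \<noteq> w \<and> Q v w > 0 then (1 / (\<pi> v * Q v w)) * (f v w)\<^sup>2 else 0)" for v w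
    have "(\<Sum>v\<in>V. \<Sum>w\<in>V. f v w * (\<phi> w - \<phi> v))
       \<le> (\<Sum>v\<in>V. \<Sum>w\<in>V. g v w + \<pi> v * Q v w * (\<phi> w - \<phi> v)\<^sup>2 / 4)"
    proof (intro sum_mono)
      fix v w assume v: "v \<in> V" and w: "w \<in> V"
      show "f v w * (\<phi> w - \<phi> v) \<le> g v w + \<pi> v * Q v w * (\<phi> w - \<phi> v)\<^sup>2 / 4"
      proof (cases "v \<noteq> w \<and> Q v w > 0")
        case True
        then have c: "\<pi> v * Q v w > 0" using pp[OF v] by simp
        show ?thesis using amgm[OF c, of "f v w" "\<phi> w - \<phi> v"] True unfolding g_def by simp
      next
        case False
        then have "f v w = 0" using supp_f by blast
        moreover have "\<pi> v * Q v w \<ge> 0" using pp[OF v] Qnn[OF v w] by simp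
        ultimately show ?thesis using False unfolding g_def by simp
      qed
    qed
    also have "\<dots> = (\<Sum>v\<in>V. \<Sum>w\<in>V. g v w) + (\<Sum>v\<in>V. \<Sum>w\<in>V. \<pi> v * Q v w * (\<phi> w - \<phi> v)\<^sup>2) / 4"
      by (simp add: sum.distrib sum_divide_distrib)
    also have "(\<Sum>v\<in>V. \<Sum>w\<in>V. g v w) = 2 * energy V Q \<pi> f"
      unfolding energy_def g_def by simp
    finally show ?thesis using S2 D by linarith
  qed
  have "ereal (S / 2) \<le> R_eff V Q \<pi> (\<lambda>v. \<sigma> v - \<nu> v)"
    unfolding R_eff_def
  proof (rule Inf_greatest)
    fix x assume "x \<in> {ereal (energy V Q \<pi> f) | f. is_flow V Q f \<and> (\<forall>v\<in>V. net_flow V f v = \<sigma> v - \<nu> v)}"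
    then obtain f where x: "x = ereal (energy V Q \<pi> f)" and f1: "is_flow V Q f" and f2: "\<forall>v\<in>V. net_flow V f v = \<sigma> v - \<nu> v" by blast
    have "S \<le> 2 * energy V Q \<pi> f" using key[OF f1 f2] .
    then show "ereal (S / 2) \<le> x" unfolding x by simp
  qed
  then have "2 * ereal (S / 2) \<le> 2 * R_eff V Q \<pi> (\<lambda>v. \<sigma> v - \<nu> v)"
    by (rule ereal_mult_left_mono) simp
  then show ?thesis unfolding S_def Q_def by simp
qed

end
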